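(* Let $M$ be a strong $r$-helix hypersurface in $E^n$ with space of helix directions $H(M)\subset\mathbb{R}^n$. Let $\alpha: I\subset\mathbb{R}\to M$ be a unit speed (arc-length parametrized) curve on $M$ with Frenet frame $\{V_1(s),\dots,V_n(s)\}$. If $\alpha$ is a geodesic curve on $M$, then for every $d\in H(M)$, $d\in\mathrm{Sp}\{V_2'\}^\perp$ along $\alpha$, i.e. $\langle V_2'(s),d\rangle=0$ for all $s\in I$.
   Context: $\langle\cdot,\cdot\rangle$ is the standard inner product on $E^n=\mathbb{R}^n$. For a hypersurface $M\subset\mathbb{R}^n$ with unit normal $N$, a vector $d$ is a helix direction of $M$ if the angle between $d$ and $T_pM$ is the same for all $p\in M$, equivalently $\langle N,d\rangle$ is constant on $M$. $H(M)$ is the set of helix directions; $M$ is a strong $r$-helix if $H(M)$ is an $r$-dimensional linear subspace. The Frenet frame of a unit speed curve with nonvanishing curvatures $k_i$ is the orthonormal frame $\{V_1=\alpha',V_2,\dots,V_n\}$ with $V_1'=k_1V_2$, $V_i'=-k_{i-1}V_{i-1}+k_iV_{i+1}$ ($1<i<n$), $V_n'=-k_{n-1}V_{n-1}$. A curve on $M$ is a geodesic if $\alpha''$ is normal to $M$. $\mathrm{Sp}\{v\}^\perp$ is the orthogonal complement of the span of $v$. *)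

theory Defs
  imports "HOL-Analysis.Analysis"
begin

definition hypersurface_with_normal :: "(real^'n) set \<Rightarrow> (real^'n \<Rightarrow> real^'n) \<Rightarrow> bool" where
  "hypersurface_with_normal M N \<longleftrightarrow>
     continuous_on M N \<and>
     (\<forall>p\<in>M. \<exists>U g G. open U \<and> p \<in> U \<and> continuous_on U G \<and>
        (\<forall>q\<in>U. (g has_derivative (\<lambda>v. G q \<bullet> v)) (at q) \<and> G q \<noteq> 0) \<and>
        M \<inter> U = {q\<in>U. g q = 0} \<and>
        (\<forall>q\<in>M \<inter> U. N q = (1 / norm (G q)) *\<^sub>R G q))"

definition tangent_space :: "(real^'n \<Rightarrow> real^'n) \<Rightarrow> real^'n \<Rightarrow> (real^'n) set" where
  "tangent_space N p = {v. N p \<bullet> v = 0}"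

definition helix_directions :: "(real^'n) set \<Rightarrow> (real^'n \<Rightarrow> real^'n) \<Rightarrow> (real^'n) set" where
  "helix_directions M N = {d. \<exists>c. \<forall>p\<in>M. N p \<bullet> d = c}"

definition strong_helix :: "nat \<Rightarrow> (real^'n) set \<Rightarrow> (real^'n \<Rightarrow> real^'n) \<Rightarrow> bool" where
  "strong_helix r M N \<longleftrightarrow> subspace (helix_directions M N) \<and> dim (helix_directions M N) = r"

definition geodesic_on :: "(real^'n) set \<Rightarrow> (real^'n \<Rightarrow> real^'n) \<Rightarrow> (real \<Rightarrow> real^'n) \<Rightarrow> real set \<Rightarrow> bool" where
  "geodesic_on M N \<alpha> I \<longleftrightarrow>
     \<alpha> ` I \<subseteq> M \<and>
     (\<forall>s\<in>I. \<alpha> differentiable (at s) \<and>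
        (\<lambda>t. vector_derivative \<alpha> (at t)) differentiable (at s) \<and>
        (\<forall>v\<in>tangent_space N (\<alpha> s).
           vector_derivative (\<lambda>t. vector_derivative \<alpha> (at t)) (at s) \<bullet> v = 0))"

definition frenet_frame :: "(real \<Rightarrow> real^'n) \<Rightarrow> real set \<Rightarrow> (nat \<Rightarrow> real \<Rightarrow> real^'n) \<Rightarrow> (nat \<Rightarrow> real \<Rightarrow> real) \<Rightarrow> bool" where
  "frenet_frame \<alpha> I V k \<longleftrightarrow>
     (let n = CARD('n) in
     (\<forall>s\<in>I.
        (\<forall>i j. 1 \<le> i \<and> i \<le> n \<and> 1 \<le> j \<and> j \<le> n \<longrightarrow> V i s \<bullet> V j s = (if i = j then 1 else 0)) \<and>
        (\<forall>i. 1 \<le> i \<and> i < n \<longrightarrow> k i s \<noteq> 0) \<and>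
        (\<alpha> has_vector_derivative V 1 s) (at s) \<and>
        (V 1 has_vector_derivative (k 1 s *\<^sub>R V 2 s)) (at s) \<and>
        (\<forall>i. 1 < i \<and> i < n \<longrightarrow>
           (V i has_vector_derivative (- (k (i - 1) s) *\<^sub>R V (i - 1) s + k i s *\<^sub>R V (i + 1) s)) (at s)) \<and>
        (V n has_vector_derivative (- (k (n - 1) s) *\<^sub>R V (n - 1) s)) (at s)))"

end

theory Submission
  imports Defs
begin

theorem theorem3p5:
  fixes M :: "(real^'n) set" and N :: "real^'n \<Rightarrow> real^'n" and r :: nat
    and \<alpha> :: "real \<Rightarrow> real^'n" and I :: "real set"
    and V :: "nat \<Rightarrow> real \<Rightarrow> real^'n" and k :: "nat \<Rightarrow> real \<Rightarrow> real"
  assumes "CARD('n) \<ge> 2"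
    and "hypersurface_with_normal M N"
    and "strong_helix r M N"
    and "open I" and "is_interval I"
    and "\<alpha> ` I \<subseteq> M"
    and "frenet_frame \<alpha> I V k"
    and "geodesic_on M N \<alpha> I"
  shows "\<forall>d\<in>helix_directions M N. \<forall>s\<in>I. vector_derivative (V 2) (at s) \<bullet> d = 0"
proof -
  let ?n = "CARD('n)"
  have fr: "\<And>s. s \<in> I \<Longrightarrow>
        (\<forall>i j. 1 \<le> i \<and> i \<le> ?n \<and> 1 \<le> j \<and> j \<le> ?n \<longrightarrow> V i s \<bullet> V j s = (if i = j then 1 else 0)) \<and>
        (\<forall>i. 1 \<le> i \<and> i < ?n \<longrightarrow> k i s \<noteq> 0) \<and>
        (\<alpha> has_vector_derivative V 1 s) (at s) \<and>
        (V 1 has_vector_derivative (k 1 s *\<^sub>R V 2 s)) (at s) \<and>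
        (\<forall>i. 1 < i \<and> i < ?n \<longrightarrow>
           (V i has_vector_derivative (- (k (i - 1) s) *\<^sub>R V (i - 1) s + k i s *\<^sub>R V (i + 1) s)) (at s)) \<and>
        (V ?n has_vector_derivative (- (k (?n - 1) s) *\<^sub>R V (?n - 1) s)) (at s)"
    using assms(7) unfolding frenet_frame_def Let_def by blast
  have V22: "V 2 s \<bullet> V 2 s = 1" if "s \<in> I" for s
    using fr[OF that] assms(1) by auto
  have k1: "k 1 s \<noteq> 0" if "s \<in> I" for s
    using fr[OF that] assms(1) by auto
  have V2der: "\<exists>D. (V 2 has_vector_derivative D) (at s)" if "s \<in> I" for s
  proof (cases "?n = 2")
    case True thus ?thesis using fr[OF that] by metis
  next
    case False
    hence "1 < (2::nat) \<and> 2 < ?n" using assms(1) by auto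
    thus ?thesis using fr[OF that] by blast
  qed
  have V2cont: "continuous_on I (V 2)"
    using V2der by (meson continuous_at_imp_continuous_on has_vector_derivative_continuous)
  have acont: "continuous_on I \<alpha>"
    using fr by (meson continuous_at_imp_continuous_on has_vector_derivative_continuous)
  have Ncont: "continuous_on M N" using assms(2) unfolding hypersurface_with_normal_def by blast
  have Nacont: "continuous_on I (\<lambda>s. N (\<alpha> s))"
    using continuous_on_compose2[OF Ncont acont assms(6)] .
  have Nunit: "N p \<bullet> N p = 1" if "p \<in> M" for p
  proof -
    obtain U g G where "p \<in> U" "G p \<noteq> 0" "\<forall>q\<in>M \<inter> U. N q = (1 / norm (G q)) *\<^sub>R G q"
      using assms(2) \<open>p \<in> M\<close> unfolding hypersurface_with_normal_def by metis
    hence "N p = (1 / norm (G p)) *\<^sub>R G p" using that by blast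
    hence "norm (N p) = 1" using \<open>G p \<noteq> 0\<close> by simp
    thus ?thesis using norm_eq_1 by blast
  qed
  have acc: "vector_derivative (\<lambda>t. vector_derivative \<alpha> (at t)) (at s) = k 1 s *\<^sub>R V 2 s"
    if s: "s \<in> I" for s
  proof -
    have "((\<lambda>t. vector_derivative \<alpha> (at t)) has_vector_derivative (k 1 s *\<^sub>R V 2 s)) (at s)"
    proof (rule has_vector_derivative_transform_within_open[OF _ assms(4) s])
      show "(V 1 has_vector_derivative k 1 s *\<^sub>R V 2 s) (at s)" using fr[OF s] by blast
      show "\<And>x. x \<in> I \<Longrightarrow> V 1 x = vector_derivative \<alpha> (at x)"
        using fr by (metis vector_derivative_at)
    qed
    thus ?thesis by (rule vector_derivative_at)
  qed
  define t where "t s = V 2 s \<bullet> N (\<alpha> s)" for s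
  have V2N: "V 2 s = t s *\<^sub>R N (\<alpha> s) \<and> (t s)\<^sup>2 = 1" if s: "s \<in> I" for s
  proof -
    have p: "\<alpha> s \<in> M" using assms(6) s by blast
    define w where "w = V 2 s - t s *\<^sub>R N (\<alpha> s)"
    have "N (\<alpha> s) \<bullet> w = 0" using Nunit[OF p] unfolding w_def t_def
      by (simp add: inner_diff_right inner_commute)
    hence "w \<in> tangent_space N (\<alpha> s)" unfolding tangent_space_def by simp
    hence "(k 1 s *\<^sub>R V 2 s) \<bullet> w = 0" using assms(8) s acc[OF s]
      unfolding geodesic_on_def by metis
    hence "V 2 s \<bullet> w = 0" using k1[OF s] by simp
    hence e: "1 - (t s)\<^sup>2 = 0" unfolding w_def using V22[OF s] unfolding t_def
      by (simp add: inner_diff_right inner_commute power2_eq_square)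
    have "w \<bullet> w = V 2 s \<bullet> V 2 s - 2 * t s * (V 2 s \<bullet> N (\<alpha> s)) + (t s)^2 * (N (\<alpha> s) \<bullet> N (\<alpha> s))"
      unfolding w_def by (simp add: inner_diff_left inner_diff_right inner_commute power2_eq_square algebra_simps)
    also have "\<dots> = 0" using e V22[OF s] Nunit[OF p] unfolding t_def by (simp add: power2_eq_square)
    finally have "w = 0" by simp
    thus ?thesis using e unfolding w_def by simp
  qed
  have tcont: "continuous_on I t" unfolding t_def
    by (intro continuous_intros V2cont Nacont)
  have tconst: "t s = t s'" if "s \<in> I" "s' \<in> I" for s s'
  proof (rule ccontr)
    assume ne: "t s \<noteq> t s'"
    have ts: "t s = 1 \<or> t s = -1" "t s' = 1 \<or> t s' = -1"
      using V2N[OF that(1)] V2N[OF that(2)] by (auto simp: power2_eq_1_iff)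
    have "connected (t ` I)"
      using connected_continuous_image[OF tcont] is_interval_connected[OF assms(5)] by blast
    hence iv: "is_interval (t ` I)" by (simp add: is_interval_connected_1)
    have "t s \<in> t ` I" "t s' \<in> t ` I" using that by auto
    hence "0 \<in> t ` I" using iv ts ne unfolding is_interval_1 by (smt (verit))
    then obtain x where "x \<in> I" "t x = 0" by auto
    thus False using V2N[of x] by simp
  qed
  show ?thesis
  proof (intro ballI)
    fix d s assume d: "d \<in> helix_directions M N" and s: "s \<in> I"
    obtain c where c: "\<forall>p\<in>M. N p \<bullet> d = c" using d unfolding helix_directions_def by blast
    obtain D where D: "(V 2 has_vector_derivative D) (at s)" using V2der[OF s] by blast
    have "((\<lambda>x. V 2 x \<bullet> d) has_real_derivative (D \<bullet> d)) (at s)"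
      using D unfolding has_real_derivative_iff_has_vector_derivative
      using bounded_linear.has_vector_derivative[OF bounded_linear_inner_left[of d] D] by simp
    moreover have "((\<lambda>x. V 2 x \<bullet> d) has_real_derivative 0) (at s)"
    proof (rule has_field_derivative_transform_within_open[OF _ assms(4) s])
      show "((\<lambda>x. t s * c) has_real_derivative 0) (at s)" by simp
      fix x assume x: "x \<in> I"
      have "V 2 x \<bullet> d = t x * (N (\<alpha> x) \<bullet> d)" using V2N[OF x]
        by (metis inner_scaleR_left)
      also have "\<dots> = t s * c" using tconst[OF x s] c assms(6) x by auto
      finally show "t s * c = V 2 x \<bullet> d" by simp
    qed
    ultimately have "D \<bullet> d = 0" by (rule DERIV_unique)
    thus "vector_derivative (V 2) (at s) \<bullet> d = 0" using vector_derivative_at[OF D] by simp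
  qed
qed

end
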